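(* The space $X_{\mathrm{crs}}$ is Hausdorff but not paracompact.
   Context: Let $X$ be the following 2-dimensional CW-complex. Its 0-cells are $e_n^0$, $n\ge 0$; the point $x=e_0^0$ is called the origin. For each $n\ge1$ there are two 1-cells $e_n^1, e_{-n}^1$, each joining $x$ to $e_n^0$, so that $e_0^0\cup e_n^0\cup e_n^1\cup e_{-n}^1$ is homeomorphic to a circle; for each $n\ge1$ a 2-cell $e_n^2$ is attached via a homeomorphism $\varphi_n:S^1\to e_0^0\cup e_n^0\cup e_n^1\cup e_{-n}^1$. Thus each closed 2-cell $\overline{e_n^2}$ is a closed disk having $x$ and $e_n^0$ on its boundary, and $X$ is a wedge at $x$ of countably many closed disks, carrying the CW (weak) topology. The coarser topology on the set $X$ consists of all subsets $U\subset X$ that are open in the CW-topology and either do not contain $x$, or contain $\overline{e_n^2}\smallsetminus e_n^0$ for all but finitely many $n\ge1$. The set $X$ with this coarser topology is denoted $X_{\mathrm{crs}}$. A space is paracompact if it is Hausdorff and every open cover has a locally finite open refinement. *)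

theory Defs
  imports "HOL-Analysis.Analysis"
begin

text \<open>Each closed 2-cell is modelled by the closed unit
disk D = cball 0 1 in the complex plane; on its boundary circle the point -1 plays
the role of the origin x = e_0^0 and the point 1 plays the role of e_n^0; the two
open arcs of the circle are the 1-cells e_n^1, e_{-n}^1. The points of X are
pairs (n, z) with n \<ge> 1, z \<in> D, z \<noteq> -1 (the point z of the n-th disk), together
with the single origin (0, -1).\<close>

definition cw_disk :: "complex set" where
  "cw_disk = cball 0 1"

definition cw_origin :: "nat \<times> complex" where
  "cw_origin = (0, -1)"

definition cw_incl :: "nat \<Rightarrow> complex \<Rightarrow> nat \<times> complex" where
  "cw_incl n z = (if z = -1 then cw_origin else (n, z))"

definition cw_carrier :: "(nat \<times> complex) set" where
  "cw_carrier = {cw_origin} \<union> {(n, z). n \<ge> 1 \<and> z \<in> cw_disk \<and> z \<noteq> -1}"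

definition cw_open :: "(nat \<times> complex) set \<Rightarrow> bool" where
  "cw_open U \<longleftrightarrow> U \<subseteq> cw_carrier \<and>
     (\<forall>n\<ge>1. openin (top_of_set cw_disk) {z \<in> cw_disk. cw_incl n z \<in> U})"

definition cw_cell_minus_vertex :: "nat \<Rightarrow> (nat \<times> complex) set" where
  "cw_cell_minus_vertex n = cw_incl n ` (cw_disk - {1})"

definition crs_open :: "(nat \<times> complex) set \<Rightarrow> bool" where
  "crs_open U \<longleftrightarrow> cw_open U \<and>
     (cw_origin \<notin> U \<or> (\<exists>F. finite F \<and> (\<forall>n. n \<ge> 1 \<and> n \<notin> F \<longrightarrow> cw_cell_minus_vertex n \<subseteq> U)))"

definition X_crs :: "(nat \<times> complex) topology" where
  "X_crs = topology crs_open"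

definition paracompact_space :: "'a topology \<Rightarrow> bool" where
  "paracompact_space X \<longleftrightarrow> Hausdorff_space X \<and>
     (\<forall>\<U>. (\<forall>U\<in>\<U>. openin X U) \<and> topspace X \<subseteq> \<Union>\<U> \<longrightarrow>
        (\<exists>\<V>. (\<forall>V\<in>\<V>. openin X V) \<and> topspace X \<subseteq> \<Union>\<V> \<and>
             (\<forall>V\<in>\<V>. \<exists>U\<in>\<U>. V \<subseteq> U) \<and> locally_finite_in X \<V>))"

lemma istopology_crs_open: "istopology crs_open"
proof -
  have e: "crs_open {}" by (simp add: crs_open_def cw_open_def)
  have i: "crs_open (S \<inter> T)" if S: "crs_open S" and T: "crs_open T" for S T
  proof -
    have cw: "cw_open (S \<inter> T)"
    proof -
      have "{z \<in> cw_disk. cw_incl n z \<in> S \<inter> T} =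
            {z \<in> cw_disk. cw_incl n z \<in> S} \<inter> {z \<in> cw_disk. cw_incl n z \<in> T}" for n by auto
      then show ?thesis using S T unfolding crs_open_def cw_open_def
        by (auto intro: openin_Int)
    qed
    show ?thesis
    proof (cases "cw_origin \<in> S \<inter> T")
      case False then show ?thesis using cw by (simp add: crs_open_def)
    next
      case True
      then obtain F G where "finite F" "\<forall>n. n \<ge> 1 \<and> n \<notin> F \<longrightarrow> cw_cell_minus_vertex n \<subseteq> S"
          "finite G" "\<forall>n. n \<ge> 1 \<and> n \<notin> G \<longrightarrow> cw_cell_minus_vertex n \<subseteq> T"
        using S T unfolding crs_open_def by blast
      then show ?thesis using cw unfolding crs_open_def
        by (intro conjI disjI2 exI[of _ "F \<union> G"]) auto
    qed
  qed
  have u: "crs_open (\<Union>K)" if K: "\<forall>S\<in>K. crs_open S" for K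
  proof -
    have cw: "cw_open (\<Union>K)"
    proof -
      have "{z \<in> cw_disk. cw_incl n z \<in> \<Union>K} = (\<Union>S\<in>K. {z \<in> cw_disk. cw_incl n z \<in> S})" for n by auto
      then show ?thesis using K unfolding crs_open_def cw_open_def
        by (auto intro!: openin_Union)
    qed
    show ?thesis
    proof (cases "cw_origin \<in> \<Union>K")
      case False then show ?thesis using cw by (simp add: crs_open_def)
    next
      case True
      then obtain S where "S \<in> K" "cw_origin \<in> S" by blast
      then obtain F where "finite F" "\<forall>n. n \<ge> 1 \<and> n \<notin> F \<longrightarrow> cw_cell_minus_vertex n \<subseteq> S"
        using K unfolding crs_open_def by blast
      then show ?thesis using cw \<open>S \<in> K\<close> unfolding crs_open_def
        by (intro conjI disjI2 exI[of _ F]) auto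
    qed
  qed
  show ?thesis unfolding istopology_def using e i u by blast
qed

lemma openin_X_crs: "openin X_crs U \<longleftrightarrow> crs_open U"
  by (simp add: X_crs_def istopology_crs_open)

end

theory Submission
  imports Defs
begin

lemma incl_carrier: "n \<ge> 1 \<Longrightarrow> z \<in> cw_disk \<Longrightarrow> cw_incl n z \<in> cw_carrier"
  by (auto simp: cw_incl_def cw_carrier_def)

lemma crs_carrier: "crs_open cw_carrier"
proof -
  have "{z \<in> cw_disk. cw_incl n z \<in> cw_carrier} = cw_disk \<inter> UNIV" if "n \<ge> 1" for n
    using incl_carrier[OF that] by auto
  hence "cw_open cw_carrier" unfolding cw_open_def by (metis openin_open_Int open_UNIV order_refl)
  moreover have "cw_cell_minus_vertex n \<subseteq> cw_carrier" if "n \<ge> 1" for n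
    using incl_carrier[OF that] by (auto simp: cw_cell_minus_vertex_def)
  ultimately show ?thesis unfolding crs_open_def by blast
qed

lemma topspace_crs: "topspace X_crs = cw_carrier"
proof
  show "topspace X_crs \<subseteq> cw_carrier"
    unfolding topspace_def openin_X_crs crs_open_def cw_open_def by blast
  show "cw_carrier \<subseteq> topspace X_crs"
    using crs_carrier openin_X_crs openin_subset by blast
qed

definition Bl :: "nat \<Rightarrow> complex \<Rightarrow> real \<Rightarrow> (nat \<times> complex) set" where
  "Bl n z r = {p \<in> cw_carrier. fst p = n \<and> dist (snd p) z < r}"

definition On :: "nat \<Rightarrow> real \<Rightarrow> (nat \<times> complex) set" where
  "On n r = {p \<in> cw_carrier. fst p \<noteq> n \<or> dist (snd p) (-1) < r}"

lemma dist_m1: "dist (-1) (z::complex) = cmod (z+1)"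
  by (simp add: dist_norm norm_minus_commute)

lemma Bl_open:
  assumes n: "n \<ge> 1" and r: "r \<le> cmod (z+1)"
  shows "crs_open (Bl n z r)"
proof -
  have "{w \<in> cw_disk. cw_incl m w \<in> Bl n z r} = cw_disk \<inter> (if m = n then ball z r else {})"
    if m: "m \<ge> 1" for m
  proof (intro set_eqI iffI)
    fix w assume "w \<in> {w \<in> cw_disk. cw_incl m w \<in> Bl n z r}"
    then show "w \<in> cw_disk \<inter> (if m = n then ball z r else {})"
      using n by (auto simp: Bl_def cw_incl_def cw_origin_def dist_commute split: if_splits)
  next
    fix w assume w: "w \<in> cw_disk \<inter> (if m = n then ball z r else {})"
    then have "w \<noteq> -1" using r dist_m1[of z] by (auto split: if_splits simp: dist_commute)
    then show "w \<in> {w \<in> cw_disk. cw_incl m w \<in> Bl n z r}"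
      using w m by (auto simp: Bl_def cw_incl_def cw_carrier_def dist_commute split: if_splits)
  qed
  then have "cw_open (Bl n z r)" unfolding cw_open_def
    by (auto simp: Bl_def)
  moreover have "cw_origin \<notin> Bl n z r" using n by (simp add: Bl_def cw_origin_def)
  ultimately show ?thesis unfolding crs_open_def by blast
qed

lemma On_open:
  assumes n: "n \<ge> 1" and rp: "0 < r"
  shows "crs_open (On n r)"
proof -
  have "{w \<in> cw_disk. cw_incl m w \<in> On n r} = cw_disk \<inter> (if m = n then ball (-1) r else UNIV)"
    if m: "m \<ge> 1" for m
  proof (intro set_eqI iffI)
    fix w assume "w \<in> {w \<in> cw_disk. cw_incl m w \<in> On n r}"
    then show "w \<in> cw_disk \<inter> (if m = n then ball (-1) r else UNIV)"
      using n rp by (auto simp: On_def cw_incl_def cw_origin_def dist_commute split: if_splits)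
  next
    fix w assume w: "w \<in> cw_disk \<inter> (if m = n then ball (-1) r else UNIV)"
    then show "w \<in> {w \<in> cw_disk. cw_incl m w \<in> On n r}"
      using w m n rp by (auto simp: On_def cw_incl_def cw_carrier_def cw_origin_def dist_commute split: if_splits)
  qed
  then have "cw_open (On n r)" unfolding cw_open_def
    by (auto simp: On_def)
  moreover have "cw_cell_minus_vertex m \<subseteq> On n r" if "m \<ge> 1" "m \<notin> {n}" for m
    using that n by (auto simp: cw_cell_minus_vertex_def On_def cw_incl_def cw_origin_def cw_carrier_def)

  ultimately show ?thesis unfolding crs_open_def by (meson finite.emptyI finite_insert)
qed

lemma carrier_cases:
  assumes "x \<in> cw_carrier"
  obtains "x = cw_origin" | n z where "x = (n, z)" "n \<ge> 1" "z \<in> cw_disk" "z \<noteq> -1"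
  using assms unfolding cw_carrier_def by auto

lemma sep_origin:
  assumes "n \<ge> 1" "z \<noteq> -1" "z \<in> cw_disk"
  shows "\<exists>U V. crs_open U \<and> crs_open V \<and> cw_origin \<in> U \<and> (n, z) \<in> V \<and> disjnt U V"
proof -
  define r where "r = cmod (z+1) / 2"
  have rp: "r > 0" using assms(2) by (simp add: r_def) (metis add_eq_0_iff2 eq_neg_iff_add_eq_0)
  have d: "disjnt (On n r) (Bl n z r)"
  proof -
    { fix p assume "p \<in> On n r" "p \<in> Bl n z r"
      then have "dist (snd p) (-1) < r" "dist (snd p) z < r" by (auto simp: On_def Bl_def)
      then have "dist (-1) z < 2 * r" using dist_triangle[of "-1" z "snd p"]
        by (simp add: dist_commute)
      then have False using dist_m1[of z] by (simp add: r_def) }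
    then show ?thesis by (auto simp: disjnt_def)
  qed
  have "cw_origin \<in> On n r" using assms crs_carrier
    by (auto simp: On_def cw_origin_def cw_carrier_def)
  moreover have "(n, z) \<in> Bl n z r" using assms rp by (simp add: Bl_def cw_carrier_def)
  moreover have "crs_open (On n r)" using On_open assms rp by blast
  moreover have "crs_open (Bl n z r)" using Bl_open assms by (simp add: r_def)
  ultimately show ?thesis using d by blast
qed

lemma sep_points:
  assumes "n \<ge> 1" "z \<noteq> -1" "z \<in> cw_disk" "m \<ge> 1" "w \<noteq> -1" "w \<in> cw_disk"
    and ne: "(n, z) \<noteq> (m, w)"
  shows "\<exists>U V. crs_open U \<and> crs_open V \<and> (n, z) \<in> U \<and> (m, w) \<in> V \<and> disjnt U V"
proof -
  define r where "r = min (min (cmod (z+1)) (cmod (w+1))) (if z = w then 1 else dist z w) / 2"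
  have z1: "cmod (z+1) > 0" "cmod (w+1) > 0" using assms
    by (simp_all add: add_eq_0_iff2)
  have rp: "r > 0" using z1 by (auto simp: r_def)
  have "r \<le> min (cmod (z+1)) (cmod (w+1)) / 2" unfolding r_def
    by (intro divide_right_mono) auto
  then have rz: "r \<le> cmod (z+1)" "r \<le> cmod (w+1)" using z1 by linarith+
  have d: "disjnt (Bl n z r) (Bl m w r)"
  proof -
    { fix p assume "p \<in> Bl n z r" "p \<in> Bl m w r"
      then have "dist (snd p) z < r" "dist (snd p) w < r" "n = m" by (auto simp: Bl_def)
      then have "dist z w < 2 * r" "z \<noteq> w" using dist_triangle[of z w "snd p"] ne
        by (auto simp: dist_commute)
      then have False by (simp add: r_def) }
    then show ?thesis by (auto simp: disjnt_def)
  qed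
  have "(n, z) \<in> Bl n z r" "(m, w) \<in> Bl m w r" using assms rp by (simp_all add: Bl_def cw_carrier_def)
  moreover have "crs_open (Bl n z r)" "crs_open (Bl m w r)" using Bl_open assms rz by auto
  ultimately show ?thesis using d by blast
qed

lemma hausdorff: "Hausdorff_space X_crs"
  unfolding Hausdorff_space_def topspace_crs openin_X_crs
proof (intro allI impI, elim conjE)
  fix x y assume x: "x \<in> cw_carrier" and y: "y \<in> cw_carrier" and ne: "x \<noteq> y"
  show "\<exists>U V. crs_open U \<and> crs_open V \<and> x \<in> U \<and> y \<in> V \<and> disjnt U V"
  proof (cases rule: carrier_cases[OF x])
    case 1
    then show ?thesis
    proof (cases rule: carrier_cases[OF y])
      case 1 then show ?thesis using ne \<open>x = cw_origin\<close> by simp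
    next
      case (2 m w) then show ?thesis using sep_origin[of m w] \<open>x = cw_origin\<close> by blast
    qed
  next
    case (2 n z)
    then show ?thesis
    proof (cases rule: carrier_cases[OF y])
      case 1 then show ?thesis using sep_origin[of n z] \<open>x = (n, z)\<close> \<open>n \<ge> 1\<close> \<open>z \<noteq> -1\<close> \<open>z \<in> cw_disk\<close>
        by (metis disjnt_sym)
    next
      case (2 m w) then show ?thesis using sep_points[of n z m w] \<open>x = (n, z)\<close> \<open>n \<ge> 1\<close> \<open>z \<noteq> -1\<close> \<open>z \<in> cw_disk\<close> ne
        by blast
    qed
  qed
qed


lemma near1:
  assumes "openin (top_of_set cw_disk) T" "1 \<in> T"
  shows "\<exists>z\<in>T. z \<noteq> 1 \<and> z \<noteq> -1"
proof -
  obtain e where e: "e > 0" "ball 1 e \<inter> cw_disk \<subseteq> T"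
    using assms openin_contains_ball by metis
  define t where "t = 1 - min e 1 / 2"
  have t: "0 < t" "t < 1" "1 - t < e" using e by (auto simp: t_def)
  define z where "z = complex_of_real t"
  have "1 - z = complex_of_real (1 - t)" by (simp add: z_def)
  then have "z \<in> ball 1 e" using t by (simp add: dist_norm del: of_real_diff)
  moreover have "z \<in> cw_disk" using t by (simp add: z_def cw_disk_def)
  moreover have "z \<noteq> 1" "z \<noteq> -1" using t by (simp_all add: z_def complex_eq_iff)
  ultimately show ?thesis using e by blast
qed

lemma not_para: "\<not> paracompact_space X_crs"
proof
  assume P: "paracompact_space X_crs"
  define A where "A = {(n, 1::complex) | n. n \<ge> (1::nat)}"
  define W where "W n = {p \<in> cw_carrier. fst p = n}" for n
  define U where "U = insert (cw_carrier - A) (W ` {n. n \<ge> 1})"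
  have one_disk: "(1::complex) \<in> cw_disk" "(-1::complex) \<in> cw_disk" by (auto simp: cw_disk_def)
  have open1: "crs_open (cw_carrier - A)"
  proof -
    have "{z \<in> cw_disk. cw_incl m z \<in> cw_carrier - A} = cw_disk \<inter> (UNIV - {1})" if "m \<ge> 1" for m
      using that by (auto simp: cw_incl_def cw_carrier_def cw_origin_def A_def)
    then have "cw_open (cw_carrier - A)" unfolding cw_open_def by (auto intro: openin_open_Int)
    moreover have "cw_origin \<notin> A" by (auto simp: A_def cw_origin_def)
    moreover have "cw_cell_minus_vertex m \<subseteq> cw_carrier - A" if "m \<ge> 1" for m
      using that by (auto simp: cw_cell_minus_vertex_def cw_incl_def cw_carrier_def A_def cw_origin_def)
    ultimately show ?thesis unfolding crs_open_def using crs_carrier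
      by (meson finite.emptyI)
  qed
  have open2: "crs_open (W n)" if n: "n \<ge> 1" for n
  proof -
    have "{z \<in> cw_disk. cw_incl m z \<in> W n} = cw_disk \<inter> (if m = n then UNIV - {-1} else {})" if "m \<ge> 1" for m
      using that n by (auto simp: cw_incl_def cw_carrier_def cw_origin_def W_def)
    then have "cw_open (W n)" unfolding cw_open_def by (auto simp: W_def intro: openin_open_Int)
    moreover have "cw_origin \<notin> W n" using n by (auto simp: W_def cw_origin_def)
    ultimately show ?thesis unfolding crs_open_def by blast
  qed
  have cover: "topspace X_crs \<subseteq> \<Union>U"
  proof
    fix p assume "p \<in> topspace X_crs"
    then have p: "p \<in> cw_carrier" by (simp add: topspace_crs)
    show "p \<in> \<Union>U"
    proof (cases "p \<in> A")
      case True
      then obtain n where "p = (n, 1)" "n \<ge> 1" by (auto simp: A_def)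
      then have "p \<in> W n" using p by (simp add: W_def)
      then show ?thesis using \<open>n \<ge> 1\<close> by (auto simp: U_def)
    next
      case False then show ?thesis using p by (auto simp: U_def)
    qed
  qed
  have Uo: "\<forall>S\<in>U. openin X_crs S" using open1 open2 by (auto simp: U_def openin_X_crs)
  obtain V where Vo: "\<forall>S\<in>V. openin X_crs S" and Vc: "topspace X_crs \<subseteq> \<Union>V"
    and Vr: "\<forall>S\<in>V. \<exists>T\<in>U. S \<subseteq> T" and Vl: "locally_finite_in X_crs V"
    using P Uo cover unfolding paracompact_space_def by blast
  have orig: "cw_origin \<in> topspace X_crs" by (simp add: topspace_crs cw_carrier_def)
  obtain N where N: "crs_open N" "cw_origin \<in> N" "finite {S \<in> V. S \<inter> N \<noteq> {}}"
    using Vl orig unfolding locally_finite_in_def openin_X_crs by blast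
  obtain F where F: "finite F" "\<And>n. n \<ge> 1 \<Longrightarrow> n \<notin> F \<Longrightarrow> cw_cell_minus_vertex n \<subseteq> N"
    using N unfolding crs_open_def by blast
  have "\<forall>n. \<exists>S. n \<ge> 1 \<longrightarrow> S \<in> V \<and> (n, 1) \<in> S"
  proof (intro allI)
    fix n :: nat
    show "\<exists>S. n \<ge> 1 \<longrightarrow> S \<in> V \<and> (n, 1) \<in> S"
    proof (cases "n \<ge> 1")
      case True
      then have "(n, 1) \<in> topspace X_crs" using one_disk by (simp add: topspace_crs cw_carrier_def)
      then show ?thesis using Vc by blast
    qed auto
  qed
  then obtain Vf where Vf: "\<And>n. n \<ge> 1 \<Longrightarrow> Vf n \<in> V \<and> (n, 1) \<in> Vf n" by metis
  have sub: "Vf n \<subseteq> W n" if n: "n \<ge> 1" for n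
  proof -
    obtain T where T: "T \<in> U" "Vf n \<subseteq> T" using Vr Vf[OF n] by blast
    have "(n, 1) \<in> T" using T Vf[OF n] by blast
    moreover have "(n, 1) \<in> A" using n by (auto simp: A_def)
    ultimately obtain m where "T = W m" using T(1) by (auto simp: U_def)
    then show ?thesis using T \<open>(n, 1) \<in> T\<close> by (auto simp: W_def)
  qed
  have inj: "inj_on Vf {n. n \<ge> 1}"
  proof (rule inj_onI)
    fix n m assume "n \<in> {n. n \<ge> 1}" "m \<in> {n. n \<ge> 1}" "Vf n = Vf m"
    then have "(m, 1) \<in> Vf n" using Vf[of m] by simp
    then have "(m, 1) \<in> W n" using sub[of n] \<open>n \<in> {n. n \<ge> 1}\<close> by blast
    then show "n = m" by (simp add: W_def)
  qed
  have meet: "Vf n \<inter> N \<noteq> {}" if n: "n \<ge> 1" "n \<notin> F" for n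
  proof -
    have "crs_open (Vf n)" using Vo Vf n by (auto simp: openin_X_crs)
    then have "openin (top_of_set cw_disk) {z \<in> cw_disk. cw_incl n z \<in> Vf n}"
      using n unfolding crs_open_def cw_open_def by blast
    moreover have "1 \<in> {z \<in> cw_disk. cw_incl n z \<in> Vf n}"
      using Vf n one_disk by (simp add: cw_incl_def)
    ultimately obtain z where z: "z \<in> cw_disk" "cw_incl n z \<in> Vf n" "z \<noteq> 1" "z \<noteq> -1"
      using near1 by blast
    have "cw_incl n z \<in> cw_cell_minus_vertex n" using z by (auto simp: cw_cell_minus_vertex_def)
    then have "cw_incl n z \<in> N" using F n by blast
    then show ?thesis using z by blast
  qed
  have "Vf ` ({n. n \<ge> 1} - F) \<subseteq> {S \<in> V. S \<inter> N \<noteq> {}}" using meet Vf by auto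
  then have "finite (Vf ` ({n. n \<ge> 1} - F))" using N(3) finite_subset by blast
  then have "finite ({n. n \<ge> 1} - F)"
    using finite_imageD[OF _ inj_on_subset[OF inj Diff_subset]] by blast
  then have "finite (({n. n \<ge> 1} - F) \<union> F)" using F(1) by blast
  then have "finite {n::nat. n \<ge> 1}" by (rule finite_subset[rotated]) blast
  then obtain m where "\<forall>n\<in>{n::nat. n \<ge> 1}. n \<le> m" using finite_nat_set_iff_bounded_le by blast
  then show False by (metis Suc_n_not_le_n le_add1 mem_Collect_eq plus_1_eq_Suc)
qed

theorem proposition1p1:
  shows "Hausdorff_space X_crs \<and> \<not> paracompact_space X_crs"
  using hausdorff not_para by blast

end
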